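(* Let $\rho$ be an $n$-qubit state and for $1\le k\le n$ let $\alpha(\rho,\mathcal S_k)$ be the optimal value of the semidefinite program: minimize $\mathrm{Tr}(W\rho)$ over Hermitian $W$ on $\mathcal H_{[n]}$ subject to $\mathrm{Tr}(W)=1$, $W=\sum_{S\in\mathcal S_k}H^S\otimes I^{[n]\setminus S}$ for some Hermitian operators $H^S$ on $\mathcal H_S$, and $W$ fully decomposable. If $\alpha(\rho,\mathcal S_k)<0$ for some $k$, then $\rho$ is genuinely entangled and $$l(\rho)\le\min\{k:\alpha(\rho,\mathcal S_k)<0\}.$$
   Context: Let $[n]=\{1,\dots,n\}$, $\mathcal H_{[n]}=(\mathbb C^2)^{\otimes n}$, $\mathcal H_S$ the tensor product of the qubits in $S$, $I^{T}$ the identity on $\mathcal H_T$, and $\mathcal S_k$ the collection of all $k$-element subsets of $[n]$. For a density matrix $\rho$, $\rho_S$ is the partial trace over qubits outside $S$. An observable $W$ is fully decomposable if for every $\emptyset\ne S\subsetneq[n]$ there exist positive semidefinite $P_S,Q_S$ with $W=P_S+Q_S^{T_S}$, where $T_S$ is the partial transpose on $\mathcal H_S$. A pure state is biseparable if it is a product $|\alpha\rangle_S\otimes|\beta\rangle_{\bar S}$ for some $\emptyset\ne S\subsetneq[n]$; a mixed state is biseparable if it is a convex combination of biseparable pure states; genuinely entangled = not biseparable. $\mathcal C(\rho,\mathcal S)=\{\sigma\text{ density matrix}:\sigma_S=\rho_S\ \forall S\in\mathcal S\}$; $\mathcal S$ detects $\rho$'s GME if all elements of $\mathcal C(\rho,\mathcal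 S)$ are genuinely entangled; $l(\rho)=\min_{\mathcal S\text{ detects }\rho\text{'s GME}}\max_{S\in\mathcal S}|S|$. *)

theory Defs
  imports Complex_Main
begin

text \<open>The computational basis of H_T (T a finite set of qubits) is indexed
  by the subsets x of T (x = set of qubits in state |1>).  An operator on H_T is a
  matrix  A :: nat set => nat set => complex, only its entries on Pow T x Pow T matter.
  A vector in H_T is a function  nat set => complex  (entries on Pow T).\<close>

type_synonym op = "nat set \<Rightarrow> nat set \<Rightarrow> complex"
type_synonym vec = "nat set \<Rightarrow> complex"

definition qubits :: "nat \<Rightarrow> nat set" where
  "qubits n = {1..n}"

definition op_eq :: "nat set \<Rightarrow> op \<Rightarrow> op \<Rightarrow> bool" where
  "op_eq T A B \<longleftrightarrow> (\<forall>x\<in>Pow T. \<forall>y\<in>Pow T. A x y = B x y)"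

definition hermitian :: "nat set \<Rightarrow> op \<Rightarrow> bool" where
  "hermitian T A \<longleftrightarrow> (\<forall>x\<in>Pow T. \<forall>y\<in>Pow T. A y x = cnj (A x y))"

definition qform :: "nat set \<Rightarrow> op \<Rightarrow> vec \<Rightarrow> complex" where
  "qform T A v = (\<Sum>x\<in>Pow T. \<Sum>y\<in>Pow T. cnj (v x) * A x y * v y)"

definition psd :: "nat set \<Rightarrow> op \<Rightarrow> bool" where
  "psd T A \<longleftrightarrow> hermitian T A \<and> (\<forall>v. Re (qform T A v) \<ge> 0)"

definition tr :: "nat set \<Rightarrow> op \<Rightarrow> complex" where
  "tr T A = (\<Sum>x\<in>Pow T. A x x)"

definition tr_prod :: "nat set \<Rightarrow> op \<Rightarrow> op \<Rightarrow> complex" where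
  "tr_prod T A B = (\<Sum>x\<in>Pow T. \<Sum>y\<in>Pow T. A x y * B y x)"

definition density :: "nat set \<Rightarrow> op \<Rightarrow> bool" where
  "density T \<rho> \<longleftrightarrow> psd T \<rho> \<and> tr T \<rho> = 1"

definition ptrace :: "nat set \<Rightarrow> nat set \<Rightarrow> op \<Rightarrow> op" where
  "ptrace N S \<rho> x y = (\<Sum>z\<in>Pow (N - S). \<rho> (x \<union> z) (y \<union> z))"

definition ptranspose :: "nat set \<Rightarrow> op \<Rightarrow> op" where
  "ptranspose S A x y = A ((x - S) \<union> (y \<inter> S)) ((y - S) \<union> (x \<inter> S))"

text \<open>H (operator on H_S) tensor identity on the remaining qubits.\<close>
definition embed :: "nat set \<Rightarrow> op \<Rightarrow> op" where
  "embed S H x y = (if x - S = y - S then H (x \<inter> S) (y \<inter> S) else 0)"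

definition fully_decomposable :: "nat set \<Rightarrow> op \<Rightarrow> bool" where
  "fully_decomposable N W \<longleftrightarrow>
     (\<forall>S. S \<noteq> {} \<and> S \<subset> N \<longrightarrow>
        (\<exists>P Q. psd N P \<and> psd N Q \<and> op_eq N W (\<lambda>x y. P x y + ptranspose S Q x y)))"

definition bisep_pure :: "nat set \<Rightarrow> vec \<Rightarrow> bool" where
  "bisep_pure N \<psi> \<longleftrightarrow> (\<Sum>x\<in>Pow N. (cmod (\<psi> x))\<^sup>2) = 1 \<and>
     (\<exists>S (\<alpha>::vec) (\<beta>::vec). S \<noteq> {} \<and> S \<subset> N \<and> (\<forall>x\<in>Pow N. \<psi> x = \<alpha> (x \<inter> S) * \<beta> (x - S)))"

definition biseparable :: "nat set \<Rightarrow> op \<Rightarrow> bool" where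
  "biseparable N \<sigma> \<longleftrightarrow>
     (\<exists>(m::nat) (p::nat\<Rightarrow>real) (\<psi>::nat\<Rightarrow>vec). (\<forall>i<m. p i \<ge> (0::real) \<and> bisep_pure N (\<psi> i)) \<and> (\<Sum>i<m. p i) = 1 \<and>
        op_eq N \<sigma> (\<lambda>x y. \<Sum>i<m. complex_of_real (p i) * \<psi> i x * cnj (\<psi> i y)))"

definition genuinely_entangled :: "nat set \<Rightarrow> op \<Rightarrow> bool" where
  "genuinely_entangled N \<sigma> \<longleftrightarrow> \<not> biseparable N \<sigma>"

definition compat :: "nat set \<Rightarrow> op \<Rightarrow> nat set set \<Rightarrow> op set" where
  "compat N \<rho> \<S> = {\<sigma>. density N \<sigma> \<and>
      (\<forall>S\<in>\<S>. op_eq S (ptrace N S \<sigma>) (ptrace N S \<rho>))}"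

definition detects :: "nat set \<Rightarrow> op \<Rightarrow> nat set set \<Rightarrow> bool" where
  "detects N \<rho> \<S> \<longleftrightarrow> (\<forall>\<sigma>\<in>compat N \<rho> \<S>. genuinely_entangled N \<sigma>)"

definition lval :: "nat set \<Rightarrow> op \<Rightarrow> nat" where
  "lval N \<rho> = (LEAST m. \<exists>\<S>. \<S> \<subseteq> Pow N \<and> detects N \<rho> \<S> \<and> (\<forall>S\<in>\<S>. card S \<le> m))"

definition subsets_k :: "nat set \<Rightarrow> nat \<Rightarrow> nat set set" where
  "subsets_k N k = {S. S \<subseteq> N \<and> card S = k}"

definition feasible :: "nat set \<Rightarrow> nat \<Rightarrow> op \<Rightarrow> bool" where
  "feasible N k W \<longleftrightarrow> hermitian N W \<and> tr N W = 1 \<and>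
     (\<exists>H. (\<forall>S\<in>subsets_k N k. hermitian S (H S)) \<and>
          op_eq N W (\<lambda>x y. \<Sum>S\<in>subsets_k N k. embed S (H S) x y)) \<and>
     fully_decomposable N W"

definition alpha :: "nat set \<Rightarrow> op \<Rightarrow> nat \<Rightarrow> real" where
  "alpha N \<rho> k = Inf {Re (tr_prod N W \<rho>) | W. feasible N k W}"

end

theory Submission
  imports Defs
begin

lemma tr_prod_cong1: "op_eq N A B \<Longrightarrow> tr_prod N A C = tr_prod N B C"
  unfolding op_eq_def tr_prod_def by (auto intro!: sum.cong)

lemma tr_prod_cong2: "op_eq N B C \<Longrightarrow> tr_prod N A B = tr_prod N A C"
  unfolding op_eq_def tr_prod_def by (auto intro!: sum.cong)

lemma qform_cong_op: "op_eq N A B \<Longrightarrow> qform N A v = qform N B v"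
  unfolding op_eq_def qform_def by (auto intro!: sum.cong)

lemma qform_cong_vec: "(\<forall>x\<in>Pow N. u x = v x) \<Longrightarrow> qform N A u = qform N A v"
  unfolding qform_def by (auto intro!: sum.cong)

lemma qform_add: "qform N (\<lambda>x y. A x y + B x y) v = qform N A v + qform N B v"
  by (simp add: qform_def distrib_left distrib_right sum.distrib)

lemma qform_prod: "qform N A v = (\<Sum>(x,y)\<in>Pow N \<times> Pow N. cnj (v x) * A x y * v y)"
  by (simp add: qform_def sum.cartesian_product)

lemma qform_ptranspose:
  assumes "S \<subseteq> N"
  shows "qform N (ptranspose S Q) (\<lambda>x. \<alpha> (x \<inter> S) * \<beta> (x - S))
       = qform N Q (\<lambda>x. cnj (\<alpha> (x \<inter> S)) * \<beta> (x - S))"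
  unfolding qform_prod
proof (rule sum.reindex_bij_witness[where i="\<lambda>(x,y). ((x - S) \<union> (y \<inter> S), (y - S) \<union> (x \<inter> S))"
      and j="\<lambda>(x,y). ((x - S) \<union> (y \<inter> S), (y - S) \<union> (x \<inter> S))"])
  fix a assume "a \<in> Pow N \<times> Pow N"
  then show "(case case a of (x, y) \<Rightarrow> (x - S \<union> y \<inter> S, y - S \<union> x \<inter> S) of
          (x, y) \<Rightarrow> (x - S \<union> y \<inter> S, y - S \<union> x \<inter> S)) = a"
    by (cases a) auto
next
  fix a assume "a \<in> Pow N \<times> Pow N"
  then show "(case a of (x, y) \<Rightarrow> (x - S \<union> y \<inter> S, y - S \<union> x \<inter> S)) \<in> Pow N \<times> Pow N"
    using assms by (cases a) auto
next
  fix a assume "a \<in> Pow N \<times> Pow N"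
  then show "(case case a of (x, y) \<Rightarrow> (x - S \<union> y \<inter> S, y - S \<union> x \<inter> S) of
          (x, y) \<Rightarrow> (x - S \<union> y \<inter> S, y - S \<union> x \<inter> S)) = a"
    by (cases a) auto
next
  fix a assume "a \<in> Pow N \<times> Pow N"
  then show "(case a of (x, y) \<Rightarrow> (x - S \<union> y \<inter> S, y - S \<union> x \<inter> S)) \<in> Pow N \<times> Pow N"
    using assms by (cases a) auto
next
  fix a assume "a \<in> Pow N \<times> Pow N"
  obtain x y where a: "a = (x,y)" by (cases a)
  have e1: "(x - S \<union> y \<inter> S) \<inter> S = y \<inter> S" "(x - S \<union> y \<inter> S) - S = x - S"
     "(y - S \<union> x \<inter> S) \<inter> S = x \<inter> S" "(y - S \<union> x \<inter> S) - S = y - S" by auto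
  show "(case case a of (x, y) \<Rightarrow> (x - S \<union> y \<inter> S, y - S \<union> x \<inter> S) of
          (x, y) \<Rightarrow> cnj (cnj (\<alpha> (x \<inter> S)) * \<beta> (x - S)) * Q x y * (cnj (\<alpha> (y \<inter> S)) * \<beta> (y - S))) =
         (case a of (x, y) \<Rightarrow> cnj (\<alpha> (x \<inter> S) * \<beta> (x - S)) * ptranspose S Q x y * (\<alpha> (y \<inter> S) * \<beta> (y - S)))"
    unfolding a by (simp add: e1 ptranspose_def mult_ac)
qed

lemma psd_qform: "psd N A \<Longrightarrow> Re (qform N A v) \<ge> 0"
  unfolding psd_def by blast

lemma bisep_qform:
  assumes fd: "fully_decomposable N W" and bp: "bisep_pure N \<psi>"
  shows "Re (qform N W \<psi>) \<ge> 0"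
proof -
  obtain S \<alpha> \<beta> where S: "S \<noteq> {}" "S \<subset> N" and ps: "\<forall>x\<in>Pow N. \<psi> x = \<alpha> (x \<inter> S) * \<beta> (x - S)"
    using bp unfolding bisep_pure_def by blast
  obtain P Q where PQ: "psd N P" "psd N Q" "op_eq N W (\<lambda>x y. P x y + ptranspose S Q x y)"
    using fd S unfolding fully_decomposable_def by blast
  have "qform N W \<psi> = qform N (\<lambda>x y. P x y + ptranspose S Q x y) \<psi>"
    using PQ(3) by (rule qform_cong_op)
  also have "\<dots> = qform N P \<psi> + qform N (ptranspose S Q) \<psi>" by (rule qform_add)
  also have "qform N (ptranspose S Q) \<psi> = qform N (ptranspose S Q) (\<lambda>x. \<alpha> (x \<inter> S) * \<beta> (x - S))"
    using ps by (rule qform_cong_vec)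
  also have "\<dots> = qform N Q (\<lambda>x. cnj (\<alpha> (x \<inter> S)) * \<beta> (x - S))"
    using S by (intro qform_ptranspose) auto
  finally show ?thesis using psd_qform[OF PQ(1)] psd_qform[OF PQ(2)] by simp
qed

lemma bisep_nonneg:
  assumes fd: "fully_decomposable N W" and bs: "biseparable N \<sigma>"
  shows "Re (tr_prod N W \<sigma>) \<ge> 0"
proof -
  obtain m :: nat and p :: "nat \<Rightarrow> real" and \<psi> :: "nat \<Rightarrow> vec" where mp: "\<forall>i<m. p i \<ge> (0::real) \<and> bisep_pure N (\<psi> i)"
    and eq: "op_eq N \<sigma> (\<lambda>x y. \<Sum>i<m. complex_of_real (p i) * \<psi> i x * cnj (\<psi> i y))"
    using bs unfolding biseparable_def by blast
  have "tr_prod N W \<sigma> = tr_prod N W (\<lambda>x y. \<Sum>i<m. complex_of_real (p i) * \<psi> i x * cnj (\<psi> i y))"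
    using eq by (rule tr_prod_cong2)
  also have "\<dots> = (\<Sum>x\<in>Pow N. \<Sum>y\<in>Pow N. \<Sum>i<m. complex_of_real (p i) * (cnj (\<psi> i x) * W x y * \<psi> i y))"
    unfolding tr_prod_def by (simp add: sum_distrib_left mult_ac)
  also have "\<dots> = (\<Sum>i<m. complex_of_real (p i) * qform N W (\<psi> i))"
    unfolding qform_def sum_distrib_left
    by (simp add: sum.swap[of _ "{..<m}"])
  finally have "Re (tr_prod N W \<sigma>) = (\<Sum>i<m. p i * Re (qform N W (\<psi> i)))"
    by simp
  also have "\<dots> \<ge> 0"
    using mp bisep_qform[OF fd] by (intro sum_nonneg) auto
  finally show ?thesis .
qed

lemma sum_Pow_split:
  assumes "S \<subseteq> N"
  shows "(\<Sum>x\<in>Pow N. f x) = (\<Sum>a\<in>Pow S. \<Sum>z\<in>Pow (N - S). f (a \<union> z))"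
proof -
  have "(\<Sum>a\<in>Pow S. \<Sum>z\<in>Pow (N - S). f (a \<union> z)) = (\<Sum>(a,z)\<in>Pow S \<times> Pow (N - S). f (a \<union> z))"
    by (simp add: sum.cartesian_product)
  also have "\<dots> = (\<Sum>x\<in>Pow N. f x)"
    by (rule sum.reindex_bij_witness[where i="\<lambda>x. (x \<inter> S, x - S)" and j="\<lambda>(a,z). a \<union> z"])
       (use assms in auto)
  finally show ?thesis by simp
qed

lemma tr_prod_embed:
  assumes "S \<subseteq> N" and fin: "finite N"
  shows "tr_prod N (embed S H) \<sigma> = tr_prod S H (ptrace N S \<sigma>)"
proof -
  have "tr_prod N (embed S H) \<sigma> =
     (\<Sum>a\<in>Pow S. \<Sum>z\<in>Pow (N - S). \<Sum>b\<in>Pow S. \<Sum>w\<in>Pow (N - S).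
        embed S H (a \<union> z) (b \<union> w) * \<sigma> (b \<union> w) (a \<union> z))"
    unfolding tr_prod_def by (simp add: sum_Pow_split[OF assms(1)])
  also have "\<dots> = (\<Sum>a\<in>Pow S. \<Sum>z\<in>Pow (N - S). \<Sum>b\<in>Pow S. H a b * \<sigma> (b \<union> z) (a \<union> z))"
  proof (intro sum.cong refl)
    fix a z b assume a: "a \<in> Pow S" and z: "z \<in> Pow (N - S)" and b: "b \<in> Pow S"
    have "(\<Sum>w\<in>Pow (N - S). embed S H (a \<union> z) (b \<union> w) * \<sigma> (b \<union> w) (a \<union> z))
        = (\<Sum>w\<in>Pow (N - S). if w = z then H a b * \<sigma> (b \<union> z) (a \<union> z) else 0)"
    proof (intro sum.cong refl)
      fix w assume w: "w \<in> Pow (N - S)"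
      have "(a \<union> z) - S = z" "(b \<union> w) - S = w" "(a \<union> z) \<inter> S = a" "(b \<union> w) \<inter> S = b"
        using a b z w by auto
      then show "embed S H (a \<union> z) (b \<union> w) * \<sigma> (b \<union> w) (a \<union> z) =
          (if w = z then H a b * \<sigma> (b \<union> z) (a \<union> z) else 0)"
        unfolding embed_def by auto
    qed
    also have "\<dots> = H a b * \<sigma> (b \<union> z) (a \<union> z)" using z fin by simp
    finally show "(\<Sum>w\<in>Pow (N - S). embed S H (a \<union> z) (b \<union> w) * \<sigma> (b \<union> w) (a \<union> z))
        = H a b * \<sigma> (b \<union> z) (a \<union> z)" .
  qed
  also have "\<dots> = (\<Sum>a\<in>Pow S. \<Sum>b\<in>Pow S. H a b * (\<Sum>z\<in>Pow (N - S). \<sigma> (b \<union> z) (a \<union> z)))"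
    by (simp add: sum_distrib_left sum.swap[of _ "Pow (N - S)"])
  also have "\<dots> = tr_prod S H (ptrace N S \<sigma>)"
    unfolding tr_prod_def ptrace_def by simp
  finally show ?thesis .
qed

lemma tr_prod_sum1: "tr_prod N (\<lambda>x y. \<Sum>S\<in>F. A S x y) C = (\<Sum>S\<in>F. tr_prod N (A S) C)"
  unfolding tr_prod_def sum_distrib_right
  by (simp add: sum.swap[of _ F])

lemma feasible_exists:
  assumes kn: "k \<le> n"
  shows "\<exists>W. feasible (qubits n) k W"
proof -
  let ?N = "qubits n"
  have fin: "finite ?N" by (simp add: qubits_def)
  have cardN: "card ?N = n" by (simp add: qubits_def)
  define c :: complex where "c = complex_of_real (1 / 2 ^ n)"
  define W :: op where "W = (\<lambda>x y. if x = y then c else 0)"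
  define F where "F = subsets_k ?N k"
  have cardF: "card F = n choose k"
    unfolding F_def subsets_k_def using n_subsets[OF fin, of k] cardN by simp
  have finF: "finite F" unfolding F_def subsets_k_def using fin by simp
  have nz: "(of_nat (n choose k) :: complex) \<noteq> 0" using kn by simp
  define d where "d = c / of_nat (n choose k)"
  define H :: "nat set \<Rightarrow> op" where "H = (\<lambda>S a b. if a = b then d else 0)"
  have cnjc: "cnj c = c" unfolding c_def by simp
  have cnjd: "cnj d = d" unfolding d_def using cnjc by simp
  have herm: "hermitian ?N W" unfolding hermitian_def W_def using cnjc by auto
  have trW: "tr ?N W = 1"
  proof -
    have "tr ?N W = of_nat (card (Pow ?N)) * c" unfolding tr_def W_def by simp
    also have "\<dots> = 1" unfolding card_Pow[OF fin] cardN c_def by simp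
    finally show ?thesis .
  qed
  have sumH: "op_eq ?N W (\<lambda>x y. \<Sum>S\<in>F. embed S (H S) x y)"
    unfolding op_eq_def
  proof (intro ballI)
    fix x y assume "x \<in> Pow ?N" "y \<in> Pow ?N"
    have e: "\<And>S. embed S (H S) x y = (if x = y then d else 0)"
    proof -
      fix S
      have "(x - S = y - S \<and> x \<inter> S = y \<inter> S) \<longleftrightarrow> x = y" by blast
      then show "embed S (H S) x y = (if x = y then d else 0)"
        unfolding embed_def H_def by auto
    qed
    show "W x y = (\<Sum>S\<in>F. embed S (H S) x y)"
      unfolding e W_def using cardF nz by (simp add: d_def)
  qed
  have psdW: "psd ?N W"
    unfolding psd_def
  proof (intro conjI herm allI)
    fix v
    have "qform ?N W v = (\<Sum>x\<in>Pow ?N. c * (cnj (v x) * v x))"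
      unfolding qform_def
    proof (intro sum.cong refl)
      fix x assume x: "x \<in> Pow ?N"
      have "(\<Sum>y\<in>Pow ?N. cnj (v x) * W x y * v y) = (\<Sum>y\<in>Pow ?N. if x = y then c * (cnj (v x) * v x) else 0)"
        by (intro sum.cong refl) (auto simp: W_def)
      also have "\<dots> = c * (cnj (v x) * v x)" using x fin by simp
      finally show "(\<Sum>y\<in>Pow ?N. cnj (v x) * W x y * v y) = c * (cnj (v x) * v x)" .
    qed
    also have "\<dots> = (\<Sum>x\<in>Pow ?N. complex_of_real (1 / 2 ^ n * (cmod (v x))\<^sup>2))"
      unfolding c_def
    proof (intro sum.cong refl)
      fix x
      have "cnj (v x) * v x = complex_of_real ((cmod (v x))\<^sup>2)"
        by (metis complex_norm_square mult.commute)
      then show "complex_of_real (1 / 2 ^ n) * (cnj (v x) * v x) = complex_of_real (1 / 2 ^ n * (cmod (v x))\<^sup>2)"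
        by (simp only: of_real_mult)
    qed
    finally have "Re (qform ?N W v) = (\<Sum>x\<in>Pow ?N. 1 / 2 ^ n * (cmod (v x))\<^sup>2)"
      by simp
    also have "\<dots> \<ge> 0" by (intro sum_nonneg) simp
    finally show "Re (qform ?N W v) \<ge> 0" .
  qed
  have psd0: "psd ?N (\<lambda>x y. 0)" unfolding psd_def hermitian_def qform_def by simp
  have fd: "fully_decomposable ?N W"
    unfolding fully_decomposable_def
  proof (intro allI impI)
    fix S :: "nat set"
    show "\<exists>P Q. psd ?N P \<and> psd ?N Q \<and> op_eq ?N W (\<lambda>x y. P x y + ptranspose S Q x y)"
      by (rule exI[of _ W], rule exI[of _ "\<lambda>x y. 0"])
         (simp add: psdW psd0 op_eq_def ptranspose_def)
  qed
  have "feasible ?N k W"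
  proof -
    have hH: "\<forall>S\<in>subsets_k ?N k. hermitian S (H S)"
      unfolding hermitian_def H_def using cnjd by simp
    have sH: "op_eq ?N W (\<lambda>x y. \<Sum>S\<in>subsets_k ?N k. embed S (H S) x y)"
      using sumH unfolding F_def .
    show ?thesis unfolding feasible_def
      using herm trW fd hH sH by blast
  qed
  then show ?thesis by blast
qed

lemma alpha_neg:
  assumes "k \<le> n" "alpha (qubits n) \<rho> k < 0"
  shows "\<exists>W. feasible (qubits n) k W \<and> Re (tr_prod (qubits n) W \<rho>) < 0"
proof (rule ccontr)
  assume na: "\<not> ?thesis"
  let ?X = "{Re (tr_prod (qubits n) W \<rho>) | W. feasible (qubits n) k W}"
  have ne: "?X \<noteq> {}" using feasible_exists[OF assms(1)] by blast
  have "\<forall>x\<in>?X. 0 \<le> x" using na by force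
  then have "0 \<le> Inf ?X" using ne by (intro cInf_greatest) auto
  then show False using assms(2) unfolding alpha_def by simp
qed

theorem proposition5:
  fixes n :: nat and \<rho> :: op
  assumes "density (qubits n) \<rho>"
    and "\<exists>k\<in>{1..n}. alpha (qubits n) \<rho> k < 0"
  shows "genuinely_entangled (qubits n) \<rho> \<and>
         lval (qubits n) \<rho> \<le> (LEAST k. k \<in> {1..n} \<and> alpha (qubits n) \<rho> k < 0)"
proof -
  let ?N = "qubits n"
  define k0 where "k0 = (LEAST k. k \<in> {1..n} \<and> alpha (qubits n) \<rho> k < 0)"
  have fin: "finite ?N" by (simp add: qubits_def)
  have k0: "k0 \<in> {1..n} \<and> alpha ?N \<rho> k0 < 0"
    unfolding k0_def using assms(2) by (metis (no_types, lifting) LeastI)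
  obtain W where W: "feasible ?N k0 W" and neg: "Re (tr_prod ?N W \<rho>) < 0"
    using alpha_neg[of k0 n \<rho>] k0 by auto
  have fd: "fully_decomposable ?N W" using W unfolding feasible_def by blast
  obtain H where H: "op_eq ?N W (\<lambda>x y. \<Sum>S\<in>subsets_k ?N k0. embed S (H S) x y)"
    using W unfolding feasible_def by blast
  have trW: "tr_prod ?N W \<sigma> = (\<Sum>S\<in>subsets_k ?N k0. tr_prod S (H S) (ptrace ?N S \<sigma>))" for \<sigma>
  proof -
    have "tr_prod ?N W \<sigma> = tr_prod ?N (\<lambda>x y. \<Sum>S\<in>subsets_k ?N k0. embed S (H S) x y) \<sigma>"
      using H by (rule tr_prod_cong1)
    also have "\<dots> = (\<Sum>S\<in>subsets_k ?N k0. tr_prod ?N (embed S (H S)) \<sigma>)"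
      by (rule tr_prod_sum1)
    also have "\<dots> = (\<Sum>S\<in>subsets_k ?N k0. tr_prod S (H S) (ptrace ?N S \<sigma>))"
      using fin by (intro sum.cong refl tr_prod_embed) (auto simp: subsets_k_def)
    finally show ?thesis .
  qed
  have ge: "genuinely_entangled ?N \<rho>"
    using bisep_nonneg[OF fd, of \<rho>] neg unfolding genuinely_entangled_def by linarith
  have det: "detects ?N \<rho> (subsets_k ?N k0)"
    unfolding detects_def
  proof
    fix \<sigma> assume "\<sigma> \<in> compat ?N \<rho> (subsets_k ?N k0)"
    then have m: "\<forall>S\<in>subsets_k ?N k0. op_eq S (ptrace ?N S \<sigma>) (ptrace ?N S \<rho>)"
      unfolding compat_def by blast
    have "tr_prod ?N W \<sigma> = tr_prod ?N W \<rho>"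
      unfolding trW using m by (intro sum.cong refl tr_prod_cong2) auto
    then show "genuinely_entangled ?N \<sigma>"
      using bisep_nonneg[OF fd, of \<sigma>] neg unfolding genuinely_entangled_def by auto
  qed
  have "lval ?N \<rho> \<le> k0"
    unfolding lval_def
    by (rule Least_le, rule exI[of _ "subsets_k ?N k0"])
       (use det in \<open>auto simp: subsets_k_def\<close>)
  then show ?thesis using ge unfolding k0_def by simp
qed

end
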